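(* Let $\mathfrak{plc}_I$ be a tropical plactic algebra with totally ordered set of generators $\{\mathfrak a_i : i\in I\}$. Then for all generators $\mathfrak a,\mathfrak b,\mathfrak c$: (KN1) $\mathfrak a\,\mathfrak c\,\mathfrak b=\mathfrak c\,\mathfrak a\,\mathfrak b$ whenever $\mathfrak a\le \mathfrak b<\mathfrak c$; (KN2) $\mathfrak b\,\mathfrak a\,\mathfrak c=\mathfrak b\,\mathfrak c\,\mathfrak a$ whenever $\mathfrak a<\mathfrak b\le \mathfrak c$. Consequently, the multiplicative monoid of $\mathfrak{plc}_I$ satisfies the plactic (Knuth) relations on its generators, i.e. the monoid morphism from the free monoid on the ordered alphabet $\{\mathfrak a_i\}$ to $(\mathfrak{plc}_I,\cdot)$ factors through the plactic monoid.
   Context: A tropical plactic algebra (troplactic algebra) $\mathfrak{plc}_I$ ($I\subseteq\mathbb N$ nonempty) is an idempotent semiring $(\mathfrak{plc}_I,+,\cdot)$ (addition commutative, associative, with $\mathfrak u+\mathfrak u=\mathfrak u$ for all $\mathfrak u$; multiplication associative, possibly noncommutative, with identity $\mathfrak e$; a zero $\mathfrak o$ which is the additive identity and multiplicatively absorbing; multiplication distributes over addition on both sides), generated as a semiring by a totally ordered set of elements $\{\mathfrak a_i: i\in I\}$, such that for all generators $\mathfrak a\le\mathfrak b\le\mathfrak c$: (TPA1) $\mathfrak a=\mathfrak e+\mathfrak a$; (TPA2) $\mathfrak b\mathfrak a=\mathfrak a+\mathfrak b$ when $\mathfrak b>\mathfrak a$; (TPA3) $\mathfrak a(\mathfrak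 b+\mathfrak c)=\mathfrak a\mathfrak b+\mathfrak c$; (TPA4) $(\mathfrak a+\mathfrak b)\mathfrak c=\mathfrak a+\mathfrak b\mathfrak c$. The plactic monoid on an ordered alphabet is the free monoid modulo the congruence generated by the Knuth relations $xzy=zxy$ ($x\le y<z$) and $yxz=yzx$ ($x<y\le z$). *)

theory Defs
  imports Main
begin

text \<open>The carrier of the semiring is the type 'a; we use the classes semiring_0 and
  monoid_mult (which do not force 0 \<noteq> 1).  Generators are a_i = g i for i in I,
  ordered by their index.\<close>

inductive_set gen_semiring :: "'a::{semiring_0,monoid_mult} set \<Rightarrow> 'a set"
  for S :: "'a set" where
  gen_zero: "0 \<in> gen_semiring S"
| gen_one: "1 \<in> gen_semiring S"
| gen_base: "s \<in> S \<Longrightarrow> s \<in> gen_semiring S"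
| gen_add: "x \<in> gen_semiring S \<Longrightarrow> y \<in> gen_semiring S \<Longrightarrow> x + y \<in> gen_semiring S"
| gen_mult: "x \<in> gen_semiring S \<Longrightarrow> y \<in> gen_semiring S \<Longrightarrow> x * y \<in> gen_semiring S"

definition troplactic :: "nat set \<Rightarrow> (nat \<Rightarrow> 'a::{semiring_0,monoid_mult}) \<Rightarrow> bool" where
  "troplactic I g \<longleftrightarrow>
     I \<noteq> {} \<and> inj_on g I \<and>
     (\<forall>x::'a. x + x = x) \<and>
     gen_semiring (g ` I) = UNIV \<and>
     (\<forall>i\<in>I. g i = 1 + g i) \<and>
     (\<forall>i\<in>I. \<forall>j\<in>I. i < j \<longrightarrow> g j * g i = g i + g j) \<and>
     (\<forall>i\<in>I. \<forall>j\<in>I. \<forall>k\<in>I. i \<le> j \<longrightarrow> j \<le> k \<longrightarrow> g i * (g j + g k) = g i * g j + g k) \<and>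
     (\<forall>i\<in>I. \<forall>j\<in>I. \<forall>k\<in>I. i \<le> j \<longrightarrow> j \<le> k \<longrightarrow> (g i + g j) * g k = g i + g j * g k)"

inductive plactic_eq :: "nat list \<Rightarrow> nat list \<Rightarrow> bool" where
  knuth1: "x \<le> y \<Longrightarrow> y < z \<Longrightarrow> plactic_eq (u @ [x, z, y] @ v) (u @ [z, x, y] @ v)"
| knuth2: "x < y \<Longrightarrow> y \<le> z \<Longrightarrow> plactic_eq (u @ [y, x, z] @ v) (u @ [y, z, x] @ v)"
| refl: "plactic_eq w w"
| sym: "plactic_eq w w' \<Longrightarrow> plactic_eq w' w"
| trans: "plactic_eq w w' \<Longrightarrow> plactic_eq w' w'' \<Longrightarrow> plactic_eq w w''"

definition word_eval :: "(nat \<Rightarrow> 'a::monoid_mult) \<Rightarrow> nat list \<Rightarrow> 'a" where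
  "word_eval g w = prod_list (map g w)"

end

theory Submission
  imports Defs
begin

lemma plactic_mset: "plactic_eq u w \<Longrightarrow> set u = set w"
  by (induction rule: plactic_eq.induct) (auto simp: add_ac)

lemma kn1:
  assumes T: "troplactic I g" and i: "i\<in>I" "j\<in>I" "k\<in>I" and o: "i \<le> j" "j < k"
  shows "g i * g k * g j = g k * g i * g j"
proof -
  have idem: "\<And>x::'a. x + x = x" and e: "\<forall>i\<in>I. g i = 1 + g i"
    and t2: "\<forall>i\<in>I. \<forall>j\<in>I. i < j \<longrightarrow> g j * g i = g i + g j"
    and t3: "\<forall>i\<in>I. \<forall>j\<in>I. \<forall>k\<in>I. i \<le> j \<longrightarrow> j \<le> k \<longrightarrow> g i * (g j + g k) = g i * g j + g k"
    using T unfolding troplactic_def by auto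
  have ck: "g k * g j = g j + g k" using t2 i o by auto
  have ci: "g k * g i = g i + g k" using t2 i o by auto
  have ab: "g i * g j = g j + g i * g j"
  proof -
    have "g i * g j = (1 + g i) * g j" using e i by metis
    also have "\<dots> = g j + g i * g j" by (simp add: distrib_right)
    finally show ?thesis .
  qed
  have "g i * g k * g j = g i * (g j + g k)" by (simp add: mult.assoc ck)
  also have "\<dots> = g i * g j + g k" using t3 i o by auto
  finally have L: "g i * g k * g j = g i * g j + g k" .
  have "g k * g i * g j = (g i + g k) * g j" by (simp add: ci)
  also have "\<dots> = g i * g j + (g j + g k)" by (simp add: distrib_right ck)
  also have "\<dots> = (g i * g j + g j) + g k" by (simp add: add.assoc)
  also have "g i * g j + g j = g i * g j"
  proof -
    have "g i * g j + g j = (g j + g i * g j) + g j" using ab by (rule arg_cong)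
    also have "\<dots> = (g j + g j) + g i * g j" by (simp add: add_ac)
    also have "\<dots> = g j + g i * g j" by (simp add: idem)
    finally show ?thesis using ab by simp
  qed
  finally show ?thesis using L by simp
qed

lemma kn2:
  assumes T: "troplactic I g" and i: "i\<in>I" "j\<in>I" "k\<in>I" and o: "i < j" "j \<le> k"
  shows "g j * g i * g k = g j * g k * g i"
proof -
  have idem: "\<And>x::'a. x + x = x" and e: "\<forall>i\<in>I. g i = 1 + g i"
    and t2: "\<forall>i\<in>I. \<forall>j\<in>I. i < j \<longrightarrow> g j * g i = g i + g j"
    and t4: "\<forall>i\<in>I. \<forall>j\<in>I. \<forall>k\<in>I. i \<le> j \<longrightarrow> j \<le> k \<longrightarrow> (g i + g j) * g k = g i + g j * g k"
    using T unfolding troplactic_def by auto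
  have ba: "g j * g i = g i + g j" using t2 i o by auto
  have ca: "g k * g i = g i + g k" using t2 i o by auto
  have bc: "g j * g k = g j + g j * g k"
  proof -
    have "g j * g k = g j * (1 + g k)" using e i by metis
    also have "\<dots> = g j + g j * g k" by (simp add: distrib_left)
    finally show ?thesis .
  qed
  have L: "g j * g i * g k = g i + g j * g k" using t4 i o ba by auto
  have "g j * g k * g i = g j * (g i + g k)" by (simp add: mult.assoc ca)
  also have "\<dots> = g i + g j + g j * g k" by (simp add: distrib_left ba)
  also have "\<dots> = g i + (g j + g j * g k)" by (simp add: add.assoc)
  also have "g j + g j * g k = g j * g k" using bc by simp
  finally show ?thesis using L by simp
qed

lemma plactic_eval:
  assumes T: "troplactic I g"
  shows "plactic_eq u w \<Longrightarrow> set u \<subseteq> I \<Longrightarrow> word_eval g u = word_eval g w"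
proof (induction rule: plactic_eq.induct)
  case (knuth1 x y z u v)
  then show ?case using kn1[OF T, of x y z]
    by (simp add: word_eval_def mult.assoc[symmetric])
next
  case (knuth2 x y z u v)
  then show ?case using kn2[OF T, of x y z]
    by (simp add: word_eval_def mult.assoc[symmetric])
next
  case (refl w) then show ?case by simp
next
  case (sym w w') then show ?case
    using plactic_mset[OF sym.hyps] by auto
next
  case (trans w w' w'') then show ?case
    using plactic_mset[OF trans.hyps(1)] by auto
qed

theorem mainTheorem1:
  fixes I :: "nat set" and g :: "nat \<Rightarrow> 'a::{semiring_0,monoid_mult}"
  assumes "troplactic I g"
  shows "(\<forall>i\<in>I. \<forall>j\<in>I. \<forall>k\<in>I. i \<le> j \<longrightarrow> j < k \<longrightarrow> g i * g k * g j = g k * g i * g j)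
       \<and> (\<forall>i\<in>I. \<forall>j\<in>I. \<forall>k\<in>I. i < j \<longrightarrow> j \<le> k \<longrightarrow> g j * g i * g k = g j * g k * g i)
       \<and> (\<forall>u w. set u \<subseteq> I \<longrightarrow> set w \<subseteq> I \<longrightarrow> plactic_eq u w \<longrightarrow> word_eval g u = word_eval g w)"
  using kn1[OF assms] kn2[OF assms] plactic_eval[OF assms] by blast

end
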